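(* Let $G$ be a finite group acting transitively on a finite set $X$, fix $x_0\in X$, let $H=G_{x_0}$, and let $K\subset G$ be a regular subgroup. Let $\rho\colon K\to U(\mathcal{H})$ be a unitary representation and $v\in\mathcal{H}$ such that $\{\rho(k)v\}_{k\in K}$ spans $\mathcal{H}$. Then there exists a unitary representation $\tilde\rho\colon G\to U(\mathcal{H})$ with $\tilde\rho|_K=\rho$ and $\tilde\rho(h)v=v$ for all $h\in H$ if and only if the function $\varphi(k)=\langle v,\rho(k)v\rangle$ ($k\in K$) belongs to $L^2(K)^H$.
   Context: $H$ acts on $K$ by $h\cdot k=k'$ iff $hk\cdot x_0=k'\cdot x_0$, and $L^2(K)^H$ is the space of functions $\varphi\colon K\to\mathbb{C}$ with $\varphi(h\cdot k)=\varphi(k)$ for all $h\in H$, $k\in K$. A subgroup $K\subset G$ is regular if it acts transitively on $X$ with trivial point stabilizers. Inner products are linear in the first argument. *)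

theory Defs
  imports "HOL-Algebra.Group_Action" "HOL-Analysis.Analysis"
begin

definition complex_inner_product ::
  "(complex \<Rightarrow> 'v::ab_group_add \<Rightarrow> 'v) \<Rightarrow> ('v \<Rightarrow> 'v \<Rightarrow> complex) \<Rightarrow> bool" where
  "complex_inner_product smul ip \<longleftrightarrow>
     (\<forall>a b c. ip (a + b) c = ip a c + ip b c) \<and>
     (\<forall>r a b. ip (smul r a) b = r * ip a b) \<and>
     (\<forall>a b. ip b a = cnj (ip a b)) \<and>
     (\<forall>a. 0 \<le> Re (ip a a)) \<and>
     (\<forall>a. ip a a = 0 \<longrightarrow> a = 0)"

definition unitary_op ::
  "(complex \<Rightarrow> 'v::ab_group_add \<Rightarrow> 'v) \<Rightarrow> ('v \<Rightarrow> 'v \<Rightarrow> complex) \<Rightarrow> ('v \<Rightarrow> 'v) \<Rightarrow> bool" where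
  "unitary_op smul ip U \<longleftrightarrow>
     Vector_Spaces.linear smul smul U \<and> bij U \<and> (\<forall>a b. ip (U a) (U b) = ip a b)"

definition unitary_rep ::
  "('g, 'm) monoid_scheme \<Rightarrow> 'g set \<Rightarrow> (complex \<Rightarrow> 'v::ab_group_add \<Rightarrow> 'v) \<Rightarrow>
   ('v \<Rightarrow> 'v \<Rightarrow> complex) \<Rightarrow> ('g \<Rightarrow> 'v \<Rightarrow> 'v) \<Rightarrow> bool" where
  "unitary_rep G S smul ip \<rho> \<longleftrightarrow>
     (\<forall>k\<in>S. unitary_op smul ip (\<rho> k)) \<and>
     (\<forall>a\<in>S. \<forall>b\<in>S. \<rho> (a \<otimes>\<^bsub>G\<^esub> b) = \<rho> a \<circ> \<rho> b)"

definition regular_subgroup ::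
  "('g, 'm) monoid_scheme \<Rightarrow> 'x set \<Rightarrow> ('g \<Rightarrow> 'x \<Rightarrow> 'x) \<Rightarrow> 'g set \<Rightarrow> bool" where
  "regular_subgroup G X \<phi> K \<longleftrightarrow> subgroup K G \<and>
     (\<forall>x\<in>X. \<forall>y\<in>X. \<exists>k\<in>K. \<phi> k x = y) \<and>
     (\<forall>x\<in>X. \<forall>k\<in>K. \<phi> k x = x \<longrightarrow> k = \<one>\<^bsub>G\<^esub>)"

definition H_act_K ::
  "('g, 'm) monoid_scheme \<Rightarrow> ('g \<Rightarrow> 'x \<Rightarrow> 'x) \<Rightarrow> 'x \<Rightarrow> 'g set \<Rightarrow> 'g \<Rightarrow> 'g \<Rightarrow> 'g" where
  "H_act_K G \<phi> x0 K h k = (THE k'. k' \<in> K \<and> \<phi> (h \<otimes>\<^bsub>G\<^esub> k) x0 = \<phi> k' x0)"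

text \<open>Membership in L^2(K)^H (K finite, so L^2(K) is all functions on K).\<close>
definition in_L2_inv ::
  "('g, 'm) monoid_scheme \<Rightarrow> ('g \<Rightarrow> 'x \<Rightarrow> 'x) \<Rightarrow> 'x \<Rightarrow> 'g set \<Rightarrow> 'g set \<Rightarrow> ('g \<Rightarrow> complex) \<Rightarrow> bool" where
  "in_L2_inv G \<phi> x0 H K f \<longleftrightarrow> (\<forall>h\<in>H. \<forall>k\<in>K. f (H_act_K G \<phi> x0 K h k) = f k)"

end

theory Submission imports Defs begin

locale cctx =
  fixes G :: "('g, 'm) monoid_scheme" and X :: "'x set" and \<phi> :: "'g \<Rightarrow> 'x \<Rightarrow> 'x"
    and x0 :: 'x and H K :: "'g set"
    and smul :: "complex \<Rightarrow> 'v::ab_group_add \<Rightarrow> 'v" and ip :: "'v \<Rightarrow> 'v \<Rightarrow> complex"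
    and \<rho> :: "'g \<Rightarrow> 'v \<Rightarrow> 'v" and v :: 'v
  assumes grp: "group G" and fin: "finite (carrier G)" and ta: "transitive_action G X \<phi>"
    and x0: "x0 \<in> X" and Hdef: "H = stabilizer G \<phi> x0"
    and reg: "regular_subgroup G X \<phi> K"
    and vs: "vector_space smul" and cip: "complex_inner_product smul ip"
    and ur: "unitary_rep G K smul ip \<rho>"
begin

sublocale grp: group G by (rule grp)
sublocale ga: group_action G X \<phi> using ta transitive_action_def by blast
sublocale V: vector_space smul by (rule vs)

lemma sub: "subgroup K G" using reg regular_subgroup_def by blast
lemma KG: "K \<subseteq> carrier G" by (rule subgroup.subset[OF sub])
lemma Kone: "\<one>\<^bsub>G\<^esub> \<in> K" by (rule subgroup.one_closed[OF sub])
lemma Kmult: "a \<in> K \<Longrightarrow> b \<in> K \<Longrightarrow> a \<otimes>\<^bsub>G\<^esub> b \<in> K" by (rule subgroup.m_closed[OF sub])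
lemma Kinv: "a \<in> K \<Longrightarrow> inv\<^bsub>G\<^esub> a \<in> K" by (rule subgroup.m_inv_closed[OF sub])

lemma finK: "finite K" using KG fin finite_subset by blast

lemma phi_X: "g \<in> carrier G \<Longrightarrow> x \<in> X \<Longrightarrow> \<phi> g x \<in> X"
  using ga.element_image by blast

lemma phi_comp: "g1 \<in> carrier G \<Longrightarrow> g2 \<in> carrier G \<Longrightarrow> x \<in> X \<Longrightarrow> \<phi> (g1 \<otimes>\<^bsub>G\<^esub> g2) x = \<phi> g1 (\<phi> g2 x)"
  using ga.composition_rule by blast

lemma phi_inv: "g \<in> carrier G \<Longrightarrow> x \<in> X \<Longrightarrow> \<phi> (inv\<^bsub>G\<^esub> g) (\<phi> g x) = x"
  using ga.orbit_sym_aux by blast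

lemma K_unique: assumes "k1 \<in> K" "k2 \<in> K" "\<phi> k1 x0 = \<phi> k2 x0" shows "k1 = k2"
proof -
  have c: "k1 \<in> carrier G" "k2 \<in> carrier G" using assms KG by auto
  have "\<phi> (inv\<^bsub>G\<^esub> k2 \<otimes>\<^bsub>G\<^esub> k1) x0 = x0"
    using phi_comp[of "inv\<^bsub>G\<^esub> k2" k1 x0] phi_inv[of k2 x0] c x0 assms(3) by simp
  moreover have "inv\<^bsub>G\<^esub> k2 \<otimes>\<^bsub>G\<^esub> k1 \<in> K" using assms Kinv Kmult by blast
  ultimately have "inv\<^bsub>G\<^esub> k2 \<otimes>\<^bsub>G\<^esub> k1 = \<one>\<^bsub>G\<^esub>" using reg x0 unfolding regular_subgroup_def by blast
  then show ?thesis using c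
    by (metis grp.inv_equality grp.inv_inv grp.inv_closed)
qed

abbreviation sig where "sig g k \<equiv> H_act_K G \<phi> x0 K g k"

lemma sig: assumes "g \<in> carrier G" "k \<in> K"
  shows "sig g k \<in> K \<and> \<phi> (sig g k) x0 = \<phi> (g \<otimes>\<^bsub>G\<^esub> k) x0"
proof -
  have "\<phi> (g \<otimes>\<^bsub>G\<^esub> k) x0 \<in> X" using assms KG x0 phi_X by blast
  then obtain k' where k': "k' \<in> K" "\<phi> k' x0 = \<phi> (g \<otimes>\<^bsub>G\<^esub> k) x0"
    using reg x0 unfolding regular_subgroup_def by blast
  have "sig g k = k'" unfolding H_act_K_def
    by (rule the_equality) (use k' K_unique in auto)
  then show ?thesis using k' by simp
qed

lemma sig_eq: assumes "g \<in> carrier G" "k \<in> K" "k' \<in> K" "\<phi> k' x0 = \<phi> (g \<otimes>\<^bsub>G\<^esub> k) x0"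
  shows "sig g k = k'"
  using sig[OF assms(1,2)] assms K_unique by metis

lemma sig_comp: assumes "a \<in> carrier G" "b \<in> carrier G" "k \<in> K"
  shows "sig a (sig b k) = sig (a \<otimes>\<^bsub>G\<^esub> b) k"
proof -
  have s1: "sig b k \<in> K" "\<phi> (sig b k) x0 = \<phi> (b \<otimes>\<^bsub>G\<^esub> k) x0" using sig assms by auto
  have s2: "sig a (sig b k) \<in> K" "\<phi> (sig a (sig b k)) x0 = \<phi> (a \<otimes>\<^bsub>G\<^esub> sig b k) x0"
    using sig assms s1 by auto
  have c: "k \<in> carrier G" "sig b k \<in> carrier G" using assms s1 KG by auto
  have "\<phi> (a \<otimes>\<^bsub>G\<^esub> sig b k) x0 = \<phi> ((a \<otimes>\<^bsub>G\<^esub> b) \<otimes>\<^bsub>G\<^esub> k) x0"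
    using phi_comp assms c x0 s1 phi_X by (simp add: grp.m_assoc)
  then show ?thesis using sig_eq assms s2 by (metis grp.m_closed)
qed

lemma sig_K: assumes "a \<in> K" "k \<in> K" shows "sig a k = a \<otimes>\<^bsub>G\<^esub> k"
  using sig_eq assms Kmult KG by blast

lemma Hmem: "h \<in> H \<longleftrightarrow> h \<in> carrier G \<and> \<phi> h x0 = x0"
  using Hdef by (simp add: stabilizer_def)

lemma sig_H: assumes "h \<in> H" shows "sig h \<one>\<^bsub>G\<^esub> = \<one>\<^bsub>G\<^esub>"
proof -
  have "h \<in> carrier G" "\<phi> h x0 = x0" using assms Hmem by auto
  then show ?thesis using sig_eq Kone x0 ga.id_eq_one
    by (metis grp.r_one restrict_apply')
qed


lemmas cipD = cip[unfolded complex_inner_product_def]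
lemma ip_add_l: "ip (a + b) c = ip a c + ip b c" using conjunct1[OF cipD] by blast
lemma ip_smul_l: "ip (smul r a) b = r * ip a b" using conjunct1[OF conjunct2[OF cipD]] by blast
lemma ip_cnj: "ip b a = cnj (ip a b)" using conjunct1[OF conjunct2[OF conjunct2[OF cipD]]] by blast
lemma ip_pos: "ip a a = 0 \<Longrightarrow> a = 0" using conjunct2[OF conjunct2[OF conjunct2[OF conjunct2[OF cipD]]]] by blast

lemma ip_zero_l: "ip 0 b = 0" using ip_add_l[of 0 0 b] by simp
lemma ip_diff_l: "ip (a - b) c = ip a c - ip b c" using ip_add_l[of "a - b" b c] by simp
lemma ip_add_r: "ip c (a + b) = ip c a + ip c b" by (metis ip_add_l ip_cnj complex_cnj_add)
lemma ip_diff_r: "ip c (a - b) = ip c a - ip c b" by (metis ip_diff_l ip_cnj complex_cnj_diff)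
lemma ip_smul_r: "ip a (smul r b) = cnj r * ip a b" by (metis ip_smul_l ip_cnj complex_cnj_mult)
lemma ip_sum_l: "ip (sum f A) b = (\<Sum>a\<in>A. ip (f a) b)"
  by (induction A rule: infinite_finite_induct) (auto simp: ip_zero_l ip_add_l)
lemma ip_sum_r: "ip b (sum f A) = (\<Sum>a\<in>A. ip b (f a))"
  by (metis (mono_tags, lifting) ip_sum_l ip_cnj cnj_sum sum.cong)

lemma ip_expand:
  "ip (\<Sum>i\<in>I. smul (c i) (x i)) (\<Sum>j\<in>J. smul (d j) (y j))
   = (\<Sum>i\<in>I. \<Sum>j\<in>J. c i * cnj (d j) * ip (x i) (y j))"
  apply (simp add: ip_sum_l ip_sum_r ip_smul_l ip_smul_r sum_distrib_left mult.assoc)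
  apply (subst sum.swap)
  apply (simp add: mult.left_commute)
  done

lemma lin_sum: assumes "Vector_Spaces.linear smul smul f"
  shows "f (\<Sum>k\<in>A. smul (c k) (x k)) = (\<Sum>k\<in>A. smul (c k) (f (x k)))"
proof -
  have mh: "module_hom smul smul f" using assms module_hom_iff_linear by blast
  show ?thesis by (simp add: module_hom.sum[OF mh] module_hom.scale[OF mh])
qed

lemma rho_unit: "k \<in> K \<Longrightarrow> unitary_op smul ip (\<rho> k)"
  using ur unfolding unitary_rep_def by blast
lemma rho_mult: "a \<in> K \<Longrightarrow> b \<in> K \<Longrightarrow> \<rho> (a \<otimes>\<^bsub>G\<^esub> b) = \<rho> a \<circ> \<rho> b"
  using ur unfolding unitary_rep_def by blast

lemma rho_one: "\<rho> \<one>\<^bsub>G\<^esub> = id"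
proof
  fix x
  have b: "bij (\<rho> \<one>\<^bsub>G\<^esub>)" using rho_unit[OF Kone] unfolding unitary_op_def by blast
  have "\<rho> \<one>\<^bsub>G\<^esub> = \<rho> \<one>\<^bsub>G\<^esub> \<circ> \<rho> \<one>\<^bsub>G\<^esub>" using rho_mult Kone by (metis grp.one_closed grp.r_one)
  then have "\<rho> \<one>\<^bsub>G\<^esub> (\<rho> \<one>\<^bsub>G\<^esub> x) = \<rho> \<one>\<^bsub>G\<^esub> x" by (metis comp_apply)
  then show "\<rho> \<one>\<^bsub>G\<^esub> x = id x" using b by (simp add: bij_def inj_eq)
qed

lemma Q: assumes "p \<in> K" "q \<in> K"
  shows "ip (\<rho> p v) (\<rho> q v) = ip v (\<rho> (inv\<^bsub>G\<^esub> p \<otimes>\<^bsub>G\<^esub> q) v)"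
proof -
  have c: "p \<in> carrier G" "q \<in> carrier G" using assms KG by auto
  have "\<rho> p (\<rho> (inv\<^bsub>G\<^esub> p \<otimes>\<^bsub>G\<^esub> q) v) = \<rho> (p \<otimes>\<^bsub>G\<^esub> (inv\<^bsub>G\<^esub> p \<otimes>\<^bsub>G\<^esub> q)) v"
    using rho_mult assms Kinv Kmult by simp
  also have "p \<otimes>\<^bsub>G\<^esub> (inv\<^bsub>G\<^esub> p \<otimes>\<^bsub>G\<^esub> q) = q" using c
    by (metis grp.inv_closed grp.m_assoc grp.r_inv grp.l_one)
  finally have e: "\<rho> p (\<rho> (inv\<^bsub>G\<^esub> p \<otimes>\<^bsub>G\<^esub> q) v) = \<rho> q v" .
  have "ip (\<rho> p v) (\<rho> p (\<rho> (inv\<^bsub>G\<^esub> p \<otimes>\<^bsub>G\<^esub> q) v)) = ip v (\<rho> (inv\<^bsub>G\<^esub> p \<otimes>\<^bsub>G\<^esub> q) v)"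
    using rho_unit[OF assms(1)] unfolding unitary_op_def by blast
  then show ?thesis using e by simp
qed


lemma grp_cancel: "x \<in> carrier G \<Longrightarrow> a \<in> carrier G \<Longrightarrow> b \<in> carrier G \<Longrightarrow>
   (x \<otimes>\<^bsub>G\<^esub> a) \<otimes>\<^bsub>G\<^esub> (inv\<^bsub>G\<^esub> a \<otimes>\<^bsub>G\<^esub> b) = x \<otimes>\<^bsub>G\<^esub> b"
  by (metis grp.inv_closed grp.m_assoc grp.r_inv grp.l_one grp.m_closed)

lemma P: assumes inv: "in_L2_inv G \<phi> x0 H K (\<lambda>k. ip v (\<rho> k v))"
  and g: "g \<in> carrier G" and ab: "a \<in> K" "b \<in> K"
  shows "ip (\<rho> (sig g a) v) (\<rho> (sig g b) v) = ip (\<rho> a v) (\<rho> b v)"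
proof -
  define s where "s = sig g a"
  define t where "t = sig g b"
  have st: "s \<in> K" "t \<in> K" "\<phi> s x0 = \<phi> (g \<otimes>\<^bsub>G\<^esub> a) x0" "\<phi> t x0 = \<phi> (g \<otimes>\<^bsub>G\<^esub> b) x0"
    using sig g ab s_def t_def by auto
  have c: "s \<in> carrier G" "t \<in> carrier G" "a \<in> carrier G" "b \<in> carrier G" "inv\<^bsub>G\<^esub> s \<in> carrier G"
    using st ab KG by auto
  define h' where "h' = inv\<^bsub>G\<^esub> s \<otimes>\<^bsub>G\<^esub> (g \<otimes>\<^bsub>G\<^esub> a)"
  have h'c: "h' \<in> carrier G" using h'_def c g by simp
  have "\<phi> h' x0 = \<phi> (inv\<^bsub>G\<^esub> s) (\<phi> s x0)"
    using h'_def phi_comp c g x0 st(3) by simp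
  also have "\<dots> = x0" using phi_inv c x0 by simp
  finally have h'H: "h' \<in> H" using Hmem h'c by simp
  define cc where "cc = inv\<^bsub>G\<^esub> a \<otimes>\<^bsub>G\<^esub> b"
  have ccK: "cc \<in> K" using cc_def ab Kinv Kmult by simp
  have "h' \<otimes>\<^bsub>G\<^esub> cc = inv\<^bsub>G\<^esub> s \<otimes>\<^bsub>G\<^esub> (g \<otimes>\<^bsub>G\<^esub> b)"
    unfolding h'_def cc_def using c g grp_cancel[of "inv\<^bsub>G\<^esub> s \<otimes>\<^bsub>G\<^esub> g" a b]
    by (simp add: grp.m_assoc)
  then have "\<phi> (h' \<otimes>\<^bsub>G\<^esub> cc) x0 = \<phi> (inv\<^bsub>G\<^esub> s \<otimes>\<^bsub>G\<^esub> t) x0"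
    using phi_comp c g x0 st(4) by simp
  then have "sig h' cc = inv\<^bsub>G\<^esub> s \<otimes>\<^bsub>G\<^esub> t"
    using sig_eq[OF h'c ccK] st Kinv Kmult by simp
  then have "ip v (\<rho> (inv\<^bsub>G\<^esub> s \<otimes>\<^bsub>G\<^esub> t) v) = ip v (\<rho> cc v)"
    using inv h'H ccK unfolding in_L2_inv_def by metis
  then show ?thesis using Q st ab s_def t_def cc_def by simp
qed

lemma iso: assumes inv: "in_L2_inv G \<phi> x0 H K (\<lambda>k. ip v (\<rho> k v))"
  and g: "g \<in> carrier G" and t: "\<tau> ` I \<subseteq> K" "\<tau>' ` J \<subseteq> K"
  shows "ip (\<Sum>i\<in>I. smul (c i) (\<rho> (sig g (\<tau> i)) v)) (\<Sum>j\<in>J. smul (d j) (\<rho> (sig g (\<tau>' j)) v))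
       = ip (\<Sum>i\<in>I. smul (c i) (\<rho> (\<tau> i) v)) (\<Sum>j\<in>J. smul (d j) (\<rho> (\<tau>' j) v))"
  unfolding ip_expand
proof (intro sum.cong refl)
  fix i j assume "i \<in> I" "j \<in> J"
  then have "\<tau> i \<in> K" "\<tau>' j \<in> K" using t by auto
  then show "c i * cnj (d j) * ip (\<rho> (sig g (\<tau> i)) v) (\<rho> (sig g (\<tau>' j)) v) =
        c i * cnj (d j) * ip (\<rho> (\<tau> i) v) (\<rho> (\<tau>' j) v)" using P[OF inv g] by simp
qed

lemma rep_ex: assumes sp: "module.span smul ((\<lambda>k. \<rho> k v) ` K) = UNIV"
  shows "\<exists>c. w = (\<Sum>k\<in>K. smul (c k) (\<rho> k v))"
proof -
  have "w \<in> V.span ((\<lambda>k. \<rho> k v) ` K)" using sp by simp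
  then show ?thesis
  proof (induction rule: V.span_induct_alt)
    case base
    show ?case by (rule exI[of _ "\<lambda>_. 0"]) simp
  next
    case (step a x y)
    then obtain k0 c where k0: "k0 \<in> K" "x = \<rho> k0 v" and c: "y = (\<Sum>k\<in>K. smul (c k) (\<rho> k v))" by blast
    have "(\<Sum>k\<in>K. smul (c k + (if k = k0 then a else 0)) (\<rho> k v))
        = y + (\<Sum>k\<in>K. (if k = k0 then smul a (\<rho> k v) else 0))"
      unfolding c V.scale_left_distrib sum.distrib by (intro arg_cong2[where f="(+)"] refl sum.cong) auto
    also have "\<dots> = smul a x + y" using k0 finK by (simp add: sum.delta add.commute)
    finally show ?case by metis
  qed
qed


definition rep where "rep w = (SOME c. w = (\<Sum>k\<in>K. smul (c k) (\<rho> k v)))"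
definition R where "R g w = (\<Sum>k\<in>K. smul (rep w k) (\<rho> (sig g k) v))"

context
  assumes inv: "in_L2_inv G \<phi> x0 H K (\<lambda>k. ip v (\<rho> k v))"
    and sp: "module.span smul ((\<lambda>k. \<rho> k v) ` K) = UNIV"
begin

lemma rep: "w = (\<Sum>k\<in>K. smul (rep w k) (\<rho> k v))"
  unfolding rep_def using rep_ex[OF sp] by (rule someI_ex)

lemma Wd: assumes g: "g \<in> carrier G" and t: "\<tau> ` I \<subseteq> K"
  shows "R g (\<Sum>i\<in>I. smul (c i) (\<rho> (\<tau> i) v)) = (\<Sum>i\<in>I. smul (c i) (\<rho> (sig g (\<tau> i)) v))"
proof -
  define w where "w = (\<Sum>i\<in>I. smul (c i) (\<rho> (\<tau> i) v))"
  define r where "r = rep w"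
  have w2: "w = (\<Sum>k\<in>K. smul (r k) (\<rho> k v))" using rep r_def by blast
  define u1 where "u1 = (\<Sum>i\<in>I. smul (c i) (\<rho> (sig g (\<tau> i)) v))"
  define u2 where "u2 = (\<Sum>k\<in>K. smul (r k) (\<rho> (sig g k) v))"
  have tK: "(\<lambda>k. k) ` K \<subseteq> K" by simp
  have e11: "ip u1 u1 = ip w w" unfolding u1_def w_def using iso[OF inv g t t] .
  have e12: "ip u1 u2 = ip w w" unfolding u1_def u2_def using iso[OF inv g t tK, of c r] w2 w_def by simp
  have e21: "ip u2 u1 = ip w w" unfolding u1_def u2_def using iso[OF inv g tK t, of r c] w2 w_def by simp
  have e22: "ip u2 u2 = ip w w" unfolding u2_def using iso[OF inv g tK tK, of r r] w2 by simp
  have "ip (u1 - u2) (u1 - u2) = 0" by (simp add: ip_diff_l ip_diff_r e11 e12 e21 e22)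
  then have "u1 - u2 = 0" by (rule ip_pos)
  then have "u1 = u2" by simp
  then show ?thesis unfolding R_def u2_def u1_def r_def w_def by simp
qed

lemma WdK: "g \<in> carrier G \<Longrightarrow> R g (\<Sum>k\<in>K. smul (c k) (\<rho> k v)) = (\<Sum>k\<in>K. smul (c k) (\<rho> (sig g k) v))"
  using Wd[of g "\<lambda>k. k" K c] by simp

lemma R_add: assumes g: "g \<in> carrier G" shows "R g (a + b) = R g a + R g b"
proof -
  have "a + b = (\<Sum>k\<in>K. smul (rep a k + rep b k) (\<rho> k v))"
    by (subst rep[of a], subst rep[of b]) (simp add: V.scale_left_distrib sum.distrib)
  then have "R g (a + b) = (\<Sum>k\<in>K. smul (rep a k + rep b k) (\<rho> (sig g k) v))"
    using WdK[OF g] by metis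
  also have "\<dots> = R g a + R g b" by (simp add: R_def V.scale_left_distrib sum.distrib)
  finally show ?thesis .
qed

lemma R_scale: assumes g: "g \<in> carrier G" shows "R g (smul r a) = smul r (R g a)"
proof -
  have "smul r a = (\<Sum>k\<in>K. smul (r * rep a k) (\<rho> k v))"
    by (subst rep[of a]) (simp add: V.scale_sum_right)
  then have "R g (smul r a) = (\<Sum>k\<in>K. smul (r * rep a k) (\<rho> (sig g k) v))"
    using WdK[OF g] by metis
  also have "\<dots> = smul r (R g a)" by (simp add: R_def V.scale_sum_right)
  finally show ?thesis .
qed

lemma R_ip: assumes g: "g \<in> carrier G" shows "ip (R g a) (R g b) = ip a b"
proof -
  have tK: "(\<lambda>k. k) ` K \<subseteq> K" by simp
  show ?thesis unfolding R_def using iso[OF inv g tK tK, of "rep a" "rep b"] rep[of a] rep[of b] by simp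
qed

lemma R_comp: assumes a: "a \<in> carrier G" and b: "b \<in> carrier G"
  shows "R a (R b w) = R (a \<otimes>\<^bsub>G\<^esub> b) w"
proof -
  have t: "sig b ` K \<subseteq> K" using sig b by auto
  have "R a (R b w) = (\<Sum>k\<in>K. smul (rep w k) (\<rho> (sig a (sig b k)) v))"
    unfolding R_def[of b] using Wd[OF a t] by simp
  also have "\<dots> = R (a \<otimes>\<^bsub>G\<^esub> b) w" unfolding R_def using sig_comp a b by simp
  finally show ?thesis .
qed

lemma R_one: "R \<one>\<^bsub>G\<^esub> w = w"
proof -
  have "R \<one>\<^bsub>G\<^esub> w = (\<Sum>k\<in>K. smul (rep w k) (\<rho> k v))"
    unfolding R_def using sig_K Kone KG by (intro sum.cong refl) (simp add: subset_iff)
  then show ?thesis using rep by simp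
qed

lemma R_bij: assumes g: "g \<in> carrier G" shows "bij (R g)"
proof (rule o_bij)
  show "R g \<circ> R (inv\<^bsub>G\<^esub> g) = id" using R_comp R_one g by (simp add: fun_eq_iff)
  show "R (inv\<^bsub>G\<^esub> g) \<circ> R g = id" using R_comp R_one g by (simp add: fun_eq_iff)
qed

lemma R_unit: "g \<in> carrier G \<Longrightarrow> unitary_op smul ip (R g)"
  unfolding unitary_op_def Vector_Spaces.linear_iff using vs R_add R_scale R_bij R_ip by blast

lemma R_rep: "unitary_rep G (carrier G) smul ip R"
  unfolding unitary_rep_def using R_unit R_comp by (auto simp: fun_eq_iff)

lemma R_K: assumes k: "k \<in> K" shows "R k = \<rho> k"
proof
  fix w
  have lin: "Vector_Spaces.linear smul smul (\<rho> k)" using rho_unit[OF k] unfolding unitary_op_def by blast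
  have "R k w = (\<Sum>j\<in>K. smul (rep w j) (\<rho> (k \<otimes>\<^bsub>G\<^esub> j) v))"
    unfolding R_def using sig_K k by simp
  also have "\<dots> = (\<Sum>j\<in>K. smul (rep w j) (\<rho> k (\<rho> j v)))" using rho_mult k by simp
  also have "\<dots> = \<rho> k (\<Sum>j\<in>K. smul (rep w j) (\<rho> j v))" using lin_sum[OF lin] by (rule sym)
  also have "\<dots> = \<rho> k w" using rep by simp
  finally show "R k w = \<rho> k w" .
qed

lemma R_H: assumes h: "h \<in> H" shows "R h v = v"
proof -
  have hc: "h \<in> carrier G" using h Hmem by simp
  have "v = (\<Sum>i\<in>{\<one>\<^bsub>G\<^esub>}. smul 1 (\<rho> i v))" using rho_one by simp
  then have "R h v = (\<Sum>i\<in>{\<one>\<^bsub>G\<^esub>}. smul 1 (\<rho> (sig h i) v))"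
    using Wd[OF hc, of "\<lambda>i. i" "{\<one>\<^bsub>G\<^esub>}" "\<lambda>_. 1"] Kone by simp
  then show ?thesis using sig_H h rho_one by simp
qed

end

lemma forward: assumes r: "unitary_rep G (carrier G) smul ip \<rho>'" and ext: "\<forall>k\<in>K. \<rho>' k = \<rho> k"
  and fix_: "\<forall>h\<in>H. \<rho>' h v = v"
  shows "in_L2_inv G \<phi> x0 H K (\<lambda>k. ip v (\<rho> k v))"
  unfolding in_L2_inv_def
proof (intro ballI)
  fix h k assume h: "h \<in> H" and k: "k \<in> K"
  have hc: "h \<in> carrier G" "\<phi> h x0 = x0" using h Hmem by auto
  have kc: "k \<in> carrier G" using k KG by auto
  define k' where "k' = sig h k"
  have k': "k' \<in> K" "\<phi> k' x0 = \<phi> (h \<otimes>\<^bsub>G\<^esub> k) x0" using sig hc k k'_def by auto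
  have k'c: "k' \<in> carrier G" using k' KG by auto
  define h2 where "h2 = inv\<^bsub>G\<^esub> k' \<otimes>\<^bsub>G\<^esub> (h \<otimes>\<^bsub>G\<^esub> k)"
  have h2c: "h2 \<in> carrier G" using h2_def hc kc k'c by simp
  have "\<phi> h2 x0 = \<phi> (inv\<^bsub>G\<^esub> k') (\<phi> k' x0)" using h2_def phi_comp hc kc k'c x0 k' by simp
  also have "\<dots> = x0" using phi_inv k'c x0 by simp
  finally have h2H: "h2 \<in> H" using Hmem h2c by simp
  have eq: "k' \<otimes>\<^bsub>G\<^esub> h2 = h \<otimes>\<^bsub>G\<^esub> k" unfolding h2_def using k'c hc kc
    by (metis grp.inv_closed grp.m_assoc grp.r_inv grp.l_one grp.m_closed)
  have hom: "\<And>a b. a \<in> carrier G \<Longrightarrow> b \<in> carrier G \<Longrightarrow> \<rho>' (a \<otimes>\<^bsub>G\<^esub> b) = \<rho>' a \<circ> \<rho>' b"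
    using r unfolding unitary_rep_def by blast
  have ipres: "ip (\<rho>' h a) (\<rho>' h b) = ip a b" for a b using r hc unfolding unitary_rep_def unitary_op_def by blast
  have "ip v (\<rho> k' v) = ip v (\<rho>' k' (\<rho>' h2 v))" using ext fix_ h2H k' by simp
  also have "\<dots> = ip v (\<rho>' (h \<otimes>\<^bsub>G\<^esub> k) v)" using hom[OF k'c h2c] eq by simp
  also have "\<dots> = ip v (\<rho>' h (\<rho> k v))" using hom[OF hc(1) kc] ext k by simp
  also have "\<dots> = ip (\<rho>' h v) (\<rho>' h (\<rho> k v))" using fix_ h by simp
  also have "\<dots> = ip v (\<rho> k v)" using ipres by simp
  finally show "ip v (\<rho> (H_act_K G \<phi> x0 K h k) v) = ip v (\<rho> k v)" using k'_def by simp
qed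

end

theorem corollary3p13:
  fixes G :: "('g, 'm) monoid_scheme" and X :: "'x set" and \<phi> :: "'g \<Rightarrow> 'x \<Rightarrow> 'x"
    and x0 :: 'x and H K :: "'g set"
    and smul :: "complex \<Rightarrow> 'v::ab_group_add \<Rightarrow> 'v" and ip :: "'v \<Rightarrow> 'v \<Rightarrow> complex"
    and \<rho> :: "'g \<Rightarrow> 'v \<Rightarrow> 'v" and v :: 'v
  assumes "group G" and "finite (carrier G)" and "finite X"
    and "transitive_action G X \<phi>"
    and "x0 \<in> X" and "H = stabilizer G \<phi> x0"
    and "regular_subgroup G X \<phi> K"
    and "vector_space smul" and "complex_inner_product smul ip"
    and "unitary_rep G K smul ip \<rho>"
    and "module.span smul ((\<lambda>k. \<rho> k v) ` K) = UNIV"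
  shows "(\<exists>\<rho>'. unitary_rep G (carrier G) smul ip \<rho>' \<and> (\<forall>k\<in>K. \<rho>' k = \<rho> k)
                \<and> (\<forall>h\<in>H. \<rho>' h v = v))
         \<longleftrightarrow> in_L2_inv G \<phi> x0 H K (\<lambda>k. ip v (\<rho> k v))"
proof -
  interpret cctx G X \<phi> x0 H K smul ip \<rho> v
    by (rule cctx.intro[OF assms(1,2,4,5,6,7,8,9,10)])
  show ?thesis
  proof
    assume "\<exists>\<rho>'. unitary_rep G (carrier G) smul ip \<rho>' \<and> (\<forall>k\<in>K. \<rho>' k = \<rho> k) \<and> (\<forall>h\<in>H. \<rho>' h v = v)"
    then show "in_L2_inv G \<phi> x0 H K (\<lambda>k. ip v (\<rho> k v))" using forward by blast
  next
    assume i: "in_L2_inv G \<phi> x0 H K (\<lambda>k. ip v (\<rho> k v))"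
    show "\<exists>\<rho>'. unitary_rep G (carrier G) smul ip \<rho>' \<and> (\<forall>k\<in>K. \<rho>' k = \<rho> k) \<and> (\<forall>h\<in>H. \<rho>' h v = v)"
      using R_rep[OF i assms(11)] R_K[OF i assms(11)] R_H[OF i assms(11)] by blast
  qed
qed

end
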